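(* Let $(T,[\cdot,\cdot],[\cdot,\cdot,\cdot],\alpha)$ be a Hom-Lie-Yamaguti algebra, let $0\to\mathfrak{h}\xrightarrow{i}\hat T\xrightarrow{p}T\to0$ be an abelian extension of $T$ by $(\mathfrak{h},\beta)$ (with $\mathfrak{h}$ identified with $i(\mathfrak{h})$), and let $\sigma:T\to\hat T$ be a section. Define $$\nu(x_1,x_2)=[\sigma(x_1),\sigma(x_2)]_{\hat T}-\sigma([x_1,x_2]),\qquad \omega(x_1,x_2,x_3)=[\sigma(x_1),\sigma(x_2),\sigma(x_3)]_{\hat T}-\sigma([x_1,x_2,x_3]).$$ Then $\nu$ and $\omega$ take values in $\mathfrak{h}$, and $(\nu,\omega)$ is a (2,3)-cocycle of $T$ with coefficients in $\mathfrak{h}$ with respect to the representation $(\rho,D,\theta)$ given by $\rho(x_1)(u)=[\sigma(x_1),u]_{\hat T}$, $D(x_1,x_2)(u)=[\sigma(x_1),\sigma(x_2),u]_{\hat T}$, $\theta(x_1,x_2)(u)=[u,\sigma(x_1),\sigma(x_2)]_{\hat T}$.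
   Context: Throughout, vector spaces are over an algebraically closed field $\mathbb{K}$ of characteristic different from 2 and 3. A Hom-Lie-Yamaguti algebra (HLYA) is a vector space $T$ with a linear map $\alpha:T\to T$, a bilinear map $[\cdot,\cdot]$ and a trilinear map $[\cdot,\cdot,\cdot]$ on $T$ such that for all $x_i,y_i\in T$: (HLY01) $\alpha([x_1,x_2])=[\alpha(x_1),\alpha(x_2)]$; (HLY02) $\alpha([x_1,x_2,x_3])=[\alpha(x_1),\alpha(x_2),\alpha(x_3)]$; (HLY1) $[x_1,x_2]+[x_2,x_1]=0$; (HLY2) $[x_1,x_2,x_3]+[x_2,x_1,x_3]=0$; (HLY3) $\sum_{\mathrm{cyc}(x_1,x_2,x_3)}([[x_1,x_2],\alpha(x_3)]+[x_1,x_2,x_3])=0$; (HLY4) $[[x_1,x_2],\alpha(x_3),\alpha(y_1)]+[[x_2,x_3],\alpha(x_1),\alpha(y_1)]+[[x_3,x_1],\alpha(x_2),\alpha(y_1)]=0$; (HLY5) $[\alpha(x_1),\alpha(x_2),[y_1,y_2]]=[[x_1,x_2,y_1],\alpha^2(y_2)]+[\alpha^2(y_1),[x_1,x_2,y_2]]$; (HLY6) $[\alpha^2(x_1),\alpha^2(x_2),[y_1,y_2,y_3]]=[[x_1,x_2,y_1],\alpha^2(y_2),\alpha^2(y_3)]+[\alpha^2(y_1),[x_1,x_2,y_2],\alpha^2(y_3)]+[\alpha^2(y_1),\alpha^2(y_2),[x_1,x_2,y_3]]$. A homomorphism of HLYAs $\varphi:(T,\alpha)\to(T',\alpha')$ is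 a linear map with $\varphi\circ\alpha=\alpha'\circ\varphi$ preserving both brackets. An extension of $(T,\alpha)$ by a HLYA $(\mathfrak{h},\beta)$ is a HLYA $(\hat T,[\cdot,\cdot]_{\hat T},[\cdot,\cdot,\cdot]_{\hat T},\hat\alpha)$ with HLYA homomorphisms $i:\mathfrak{h}\to\hat T$ (injective) and $p:\hat T\to T$ (surjective), $\mathrm{Im}(i)=\mathrm{Ker}(p)$. It is abelian if $[u,v]_{\hat T}=0$ and $[u,v,z]_{\hat T}=[u,z,v]_{\hat T}=[z,u,v]_{\hat T}=0$ for all $u,v\in i(\mathfrak{h})$, $z\in\hat T$. A section is a linear map $\sigma:T\to\hat T$ with $p\circ\sigma=\mathrm{id}_T$ and $\hat\alpha\circ\sigma=\sigma\circ\alpha$. (The maps $\rho,D,\theta$ defined in the claim form a representation of $(T,\alpha)$ on $(\mathfrak{h},\beta)$.) For a representation $(\rho,D,\theta)$ of $(T,\alpha)$ on a Hom-vector space $(V,\beta)$, a (2,3)-cocycle is a pair of a bilinear map $\nu:T\times T\to V$ and a trilinear map $\omega:T^3\to V$ with $\nu(x_1,x_2)=-\nu(x_2,x_1)$, $\omega(x_1,x_2,x_3)=-\omega(x_2,x_1,x_3)$ and, for all $x_i,y_i\in T$: (CC01) $\nu(\alpha(x_1),\alpha(x_2))=\beta(\nu(x_1,x_2))$; (CC02) $\omega(\alpha(x_1),\alpha(x_2),\alpha(x_3))=\beta(\omega(x_1,x_2,x_3))$; (CC1) $\sum_{\mathrm{cyc}(x_1,x_2,x_3)}\big(\omega(x_1,x_2,x_3)-\rho(\alpha(x_1))\nu(x_2,x_3)+\nu([x_1,x_2],\alpha(x_3))\big)=0$;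 (CC2) $\sum_{\mathrm{cyc}(x_1,x_2,x_3)}\big(\theta(\alpha(x_1),\alpha(y_1))\nu(x_2,x_3)+\omega([x_1,x_2],\alpha(x_3),\alpha(y_1))\big)=0$; (CC3) $\omega(\alpha(x_1),\alpha(x_2),[y_1,y_2])+D(\alpha(x_1),\alpha(x_2))\nu(y_1,y_2)=\nu([x_1,x_2,y_1],\alpha^2(y_2))+\nu(\alpha^2(y_1),[x_1,x_2,y_2])+\rho(\alpha^2(y_1))\omega(x_1,x_2,y_2)-\rho(\alpha^2(y_2))\omega(x_1,x_2,y_1)$; (CC4) $\omega(\alpha^2(x_1),\alpha^2(x_2),[y_1,y_2,y_3])+D(\alpha^2(x_1),\alpha^2(x_2))\omega(y_1,y_2,y_3)=\omega([x_1,x_2,y_1],\alpha^2(y_2),\alpha^2(y_3))+\omega(\alpha^2(y_1),[x_1,x_2,y_2],\alpha^2(y_3))+\omega(\alpha^2(y_1),\alpha^2(y_2),[x_1,x_2,y_3])+\theta(\alpha^2(y_2),\alpha^2(y_3))\omega(x_1,x_2,y_1)-\theta(\alpha^2(y_1),\alpha^2(y_3))\omega(x_1,x_2,y_2)+D(\alpha^2(y_1),\alpha^2(y_2))\omega(x_1,x_2,y_3)$. *)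

theory Defs
  imports Main "HOL-Computational_Algebra.Polynomial"
begin

definition alg_closed_field :: "'k::field itself \<Rightarrow> bool" where
  "alg_closed_field _ \<longleftrightarrow> (\<forall>p :: 'k poly. degree p > 0 \<longrightarrow> (\<exists>x. poly p x = 0))"

definition char_not_2_3 :: "'k::field itself \<Rightarrow> bool" where
  "char_not_2_3 _ \<longleftrightarrow> (2::'k) \<noteq> 0 \<and> (3::'k) \<noteq> 0"

definition bilin :: "('k::field \<Rightarrow> 'a::ab_group_add \<Rightarrow> 'a) \<Rightarrow> ('k \<Rightarrow> 'b::ab_group_add \<Rightarrow> 'b)
    \<Rightarrow> ('k \<Rightarrow> 'c::ab_group_add \<Rightarrow> 'c) \<Rightarrow> ('a \<Rightarrow> 'b \<Rightarrow> 'c) \<Rightarrow> bool" where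
  "bilin s1 s2 s3 f \<longleftrightarrow>
     (\<forall>x. Vector_Spaces.linear s2 s3 (f x)) \<and> (\<forall>y. Vector_Spaces.linear s1 s3 (\<lambda>x. f x y))"

definition trilin :: "('k::field \<Rightarrow> 'a::ab_group_add \<Rightarrow> 'a) \<Rightarrow> ('k \<Rightarrow> 'b::ab_group_add \<Rightarrow> 'b)
    \<Rightarrow> ('k \<Rightarrow> 'c::ab_group_add \<Rightarrow> 'c) \<Rightarrow> ('k \<Rightarrow> 'd::ab_group_add \<Rightarrow> 'd)
    \<Rightarrow> ('a \<Rightarrow> 'b \<Rightarrow> 'c \<Rightarrow> 'd) \<Rightarrow> bool" where
  "trilin s1 s2 s3 s4 f \<longleftrightarrow>
     (\<forall>x y. Vector_Spaces.linear s3 s4 (f x y)) \<and>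
     (\<forall>x z. Vector_Spaces.linear s2 s4 (\<lambda>y. f x y z)) \<and>
     (\<forall>y z. Vector_Spaces.linear s1 s4 (\<lambda>x. f x y z))"

definition HLYA :: "('k::field \<Rightarrow> 'a::ab_group_add \<Rightarrow> 'a) \<Rightarrow> ('a \<Rightarrow> 'a \<Rightarrow> 'a)
    \<Rightarrow> ('a \<Rightarrow> 'a \<Rightarrow> 'a \<Rightarrow> 'a) \<Rightarrow> ('a \<Rightarrow> 'a) \<Rightarrow> bool" where
  "HLYA s br tr \<alpha> \<longleftrightarrow>
     Vector_Spaces.linear s s \<alpha> \<and> bilin s s s br \<and> trilin s s s s tr \<and>
     (\<forall>x1 x2. \<alpha> (br x1 x2) = br (\<alpha> x1) (\<alpha> x2)) \<and>
     (\<forall>x1 x2 x3. \<alpha> (tr x1 x2 x3) = tr (\<alpha> x1) (\<alpha> x2) (\<alpha> x3)) \<and>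
     (\<forall>x1 x2. br x1 x2 + br x2 x1 = 0) \<and>
     (\<forall>x1 x2 x3. tr x1 x2 x3 + tr x2 x1 x3 = 0) \<and>
     (\<forall>x1 x2 x3.
        (br (br x1 x2) (\<alpha> x3) + tr x1 x2 x3) + (br (br x2 x3) (\<alpha> x1) + tr x2 x3 x1)
        + (br (br x3 x1) (\<alpha> x2) + tr x3 x1 x2) = 0) \<and>
     (\<forall>x1 x2 x3 y1.
        tr (br x1 x2) (\<alpha> x3) (\<alpha> y1) + tr (br x2 x3) (\<alpha> x1) (\<alpha> y1)
        + tr (br x3 x1) (\<alpha> x2) (\<alpha> y1) = 0) \<and>
     (\<forall>x1 x2 y1 y2.
        tr (\<alpha> x1) (\<alpha> x2) (br y1 y2)
        = br (tr x1 x2 y1) (\<alpha> (\<alpha> y2)) + br (\<alpha> (\<alpha> y1)) (tr x1 x2 y2)) \<and>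
     (\<forall>x1 x2 y1 y2 y3.
        tr (\<alpha> (\<alpha> x1)) (\<alpha> (\<alpha> x2)) (tr y1 y2 y3)
        = tr (tr x1 x2 y1) (\<alpha> (\<alpha> y2)) (\<alpha> (\<alpha> y3))
          + tr (\<alpha> (\<alpha> y1)) (tr x1 x2 y2) (\<alpha> (\<alpha> y3))
          + tr (\<alpha> (\<alpha> y1)) (\<alpha> (\<alpha> y2)) (tr x1 x2 y3))"

definition HLYA_hom :: "('k::field \<Rightarrow> 'a::ab_group_add \<Rightarrow> 'a) \<Rightarrow> ('a \<Rightarrow> 'a \<Rightarrow> 'a)
    \<Rightarrow> ('a \<Rightarrow> 'a \<Rightarrow> 'a \<Rightarrow> 'a) \<Rightarrow> ('a \<Rightarrow> 'a)
    \<Rightarrow> ('k \<Rightarrow> 'b::ab_group_add \<Rightarrow> 'b) \<Rightarrow> ('b \<Rightarrow> 'b \<Rightarrow> 'b)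
    \<Rightarrow> ('b \<Rightarrow> 'b \<Rightarrow> 'b \<Rightarrow> 'b) \<Rightarrow> ('b \<Rightarrow> 'b) \<Rightarrow> ('a \<Rightarrow> 'b) \<Rightarrow> bool" where
  "HLYA_hom s1 br1 tr1 \<alpha>1 s2 br2 tr2 \<alpha>2 \<phi> \<longleftrightarrow>
     Vector_Spaces.linear s1 s2 \<phi> \<and>
     (\<forall>x. \<phi> (\<alpha>1 x) = \<alpha>2 (\<phi> x)) \<and>
     (\<forall>x y. \<phi> (br1 x y) = br2 (\<phi> x) (\<phi> y)) \<and>
     (\<forall>x y z. \<phi> (tr1 x y z) = tr2 (\<phi> x) (\<phi> y) (\<phi> z))"

definition HLYA_extension where
  "HLYA_extension sT brT trT \<alpha> sh brh trh \<beta> sE brE trE \<alpha>E i p \<longleftrightarrow>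
     HLYA sT brT trT \<alpha> \<and> HLYA sh brh trh \<beta> \<and> HLYA sE brE trE \<alpha>E \<and>
     HLYA_hom sh brh trh \<beta> sE brE trE \<alpha>E i \<and> inj i \<and>
     HLYA_hom sE brE trE \<alpha>E sT brT trT \<alpha> p \<and> surj p \<and>
     range i = {z. p z = 0}"

definition abelian_extension where
  "abelian_extension sT brT trT \<alpha> sh brh trh \<beta> sE brE trE \<alpha>E i p \<longleftrightarrow>
     HLYA_extension sT brT trT \<alpha> sh brh trh \<beta> sE brE trE \<alpha>E i p \<and>
     (\<forall>u\<in>range i. \<forall>v\<in>range i. brE u v = 0 \<and>
        (\<forall>z. trE u v z = 0 \<and> trE u z v = 0 \<and> trE z u v = 0))"

definition is_section where
  "is_section sT \<alpha> sE \<alpha>E p \<sigma> \<longleftrightarrow>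
     Vector_Spaces.linear sT sE \<sigma> \<and> (\<forall>x. p (\<sigma> x) = x) \<and> (\<forall>x. \<alpha>E (\<sigma> x) = \<sigma> (\<alpha> x))"

text \<open>Coefficients in a Hom-vector space (V,beta), where V is given as a subset of an
  ambient vector space (type 'v with scalar multiplication sV); nu, omega take values in V.\<close>

definition cocycle23 :: "('k::field \<Rightarrow> 't::ab_group_add \<Rightarrow> 't) \<Rightarrow> ('t \<Rightarrow> 't \<Rightarrow> 't)
    \<Rightarrow> ('t \<Rightarrow> 't \<Rightarrow> 't \<Rightarrow> 't) \<Rightarrow> ('t \<Rightarrow> 't)
    \<Rightarrow> ('k \<Rightarrow> 'v::ab_group_add \<Rightarrow> 'v) \<Rightarrow> 'v set \<Rightarrow> ('v \<Rightarrow> 'v)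
    \<Rightarrow> ('t \<Rightarrow> 'v \<Rightarrow> 'v) \<Rightarrow> ('t \<Rightarrow> 't \<Rightarrow> 'v \<Rightarrow> 'v) \<Rightarrow> ('t \<Rightarrow> 't \<Rightarrow> 'v \<Rightarrow> 'v)
    \<Rightarrow> ('t \<Rightarrow> 't \<Rightarrow> 'v) \<Rightarrow> ('t \<Rightarrow> 't \<Rightarrow> 't \<Rightarrow> 'v) \<Rightarrow> bool" where
  "cocycle23 sT br tr \<alpha> sV V \<beta> \<rho> D \<theta> \<nu> \<omega> \<longleftrightarrow>
     (\<forall>x1 x2. \<nu> x1 x2 \<in> V) \<and> (\<forall>x1 x2 x3. \<omega> x1 x2 x3 \<in> V) \<and>
     bilin sT sT sV \<nu> \<and> trilin sT sT sT sV \<omega> \<and>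
     (\<forall>x1 x2. \<nu> x1 x2 = - \<nu> x2 x1) \<and>
     (\<forall>x1 x2 x3. \<omega> x1 x2 x3 = - \<omega> x2 x1 x3) \<and>
     (\<forall>x1 x2. \<nu> (\<alpha> x1) (\<alpha> x2) = \<beta> (\<nu> x1 x2)) \<and>
     (\<forall>x1 x2 x3. \<omega> (\<alpha> x1) (\<alpha> x2) (\<alpha> x3) = \<beta> (\<omega> x1 x2 x3)) \<and>
     (\<forall>x1 x2 x3.
        (\<omega> x1 x2 x3 - \<rho> (\<alpha> x1) (\<nu> x2 x3) + \<nu> (br x1 x2) (\<alpha> x3))
      + (\<omega> x2 x3 x1 - \<rho> (\<alpha> x2) (\<nu> x3 x1) + \<nu> (br x2 x3) (\<alpha> x1))
      + (\<omega> x3 x1 x2 - \<rho> (\<alpha> x3) (\<nu> x1 x2) + \<nu> (br x3 x1) (\<alpha> x2)) = 0) \<and>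
     (\<forall>x1 x2 x3 y1.
        (\<theta> (\<alpha> x1) (\<alpha> y1) (\<nu> x2 x3) + \<omega> (br x1 x2) (\<alpha> x3) (\<alpha> y1))
      + (\<theta> (\<alpha> x2) (\<alpha> y1) (\<nu> x3 x1) + \<omega> (br x2 x3) (\<alpha> x1) (\<alpha> y1))
      + (\<theta> (\<alpha> x3) (\<alpha> y1) (\<nu> x1 x2) + \<omega> (br x3 x1) (\<alpha> x2) (\<alpha> y1)) = 0) \<and>
     (\<forall>x1 x2 y1 y2.
        \<omega> (\<alpha> x1) (\<alpha> x2) (br y1 y2) + D (\<alpha> x1) (\<alpha> x2) (\<nu> y1 y2)
        = \<nu> (tr x1 x2 y1) (\<alpha> (\<alpha> y2)) + \<nu> (\<alpha> (\<alpha> y1)) (tr x1 x2 y2)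
          + \<rho> (\<alpha> (\<alpha> y1)) (\<omega> x1 x2 y2) - \<rho> (\<alpha> (\<alpha> y2)) (\<omega> x1 x2 y1)) \<and>
     (\<forall>x1 x2 y1 y2 y3.
        \<omega> (\<alpha> (\<alpha> x1)) (\<alpha> (\<alpha> x2)) (tr y1 y2 y3) + D (\<alpha> (\<alpha> x1)) (\<alpha> (\<alpha> x2)) (\<omega> y1 y2 y3)
        = \<omega> (tr x1 x2 y1) (\<alpha> (\<alpha> y2)) (\<alpha> (\<alpha> y3))
          + \<omega> (\<alpha> (\<alpha> y1)) (tr x1 x2 y2) (\<alpha> (\<alpha> y3))
          + \<omega> (\<alpha> (\<alpha> y1)) (\<alpha> (\<alpha> y2)) (tr x1 x2 y3)
          + \<theta> (\<alpha> (\<alpha> y2)) (\<alpha> (\<alpha> y3)) (\<omega> x1 x2 y1)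
          - \<theta> (\<alpha> (\<alpha> y1)) (\<alpha> (\<alpha> y3)) (\<omega> x1 x2 y2)
          + D (\<alpha> (\<alpha> y1)) (\<alpha> (\<alpha> y2)) (\<omega> x1 x2 y3))"

end

theory Submission
  imports Defs
begin

lemma additive_facts:
  fixes f :: "'a::ab_group_add \<Rightarrow> 'b::ab_group_add"
  assumes a: "\<forall>x y. f (x + y) = f x + f y"
  shows "f (x - y) = f x - f y" "f 0 = 0" "f (- x) = - f x"
proof -
  have z: "f 0 = 0" using a[rule_format, of 0 0] by simp
  have d: "f (u - v) = f u - f v" for u v
    using a[rule_format, of "u - v" v] by (simp add: algebra_simps)
  show "f (x - y) = f x - f y" by (rule d)
  show "f 0 = 0" by (rule z)
  show "f (- x) = - f x" using d[of 0 x] z by simp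
qed

lemma lin_add: "Vector_Spaces.linear s1 s2 f \<Longrightarrow> f (x + y) = f x + f y"
  unfolding Vector_Spaces.linear_iff by blast

lemma lin_diff: "Vector_Spaces.linear s1 s2 f \<Longrightarrow> f (x - y) = f x - f y"
  by (rule additive_facts(1)) (auto simp: Vector_Spaces.linear_iff)

lemma lin_scale: "Vector_Spaces.linear s1 s2 f \<Longrightarrow> f (s1 c x) = s2 c (f x)"
  unfolding Vector_Spaces.linear_iff by blast

lemma lin_comp: "Vector_Spaces.linear s1 s2 f \<Longrightarrow> Vector_Spaces.linear s2 s3 g
   \<Longrightarrow> Vector_Spaces.linear s1 s3 (\<lambda>x. g (f x))"
  using Vector_Spaces.linear_compose[of s1 s2 f s3 g] by (simp add: o_def)

lemma lin_sub: "Vector_Spaces.linear s1 s2 f \<Longrightarrow> Vector_Spaces.linear s1 s2 g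
   \<Longrightarrow> Vector_Spaces.linear s1 s2 (\<lambda>x. f x - g x)"
  unfolding Vector_Spaces.linear_iff
  by (auto simp: algebra_simps module.scale_right_diff_distrib module_iff_vector_space)

theorem lemma4p4:
  fixes sT :: "'k::field \<Rightarrow> 't::ab_group_add \<Rightarrow> 't"
    and brT :: "'t \<Rightarrow> 't \<Rightarrow> 't" and trT :: "'t \<Rightarrow> 't \<Rightarrow> 't \<Rightarrow> 't" and \<alpha> :: "'t \<Rightarrow> 't"
    and sh :: "'k \<Rightarrow> 'h::ab_group_add \<Rightarrow> 'h"
    and brh :: "'h \<Rightarrow> 'h \<Rightarrow> 'h" and trh :: "'h \<Rightarrow> 'h \<Rightarrow> 'h \<Rightarrow> 'h" and \<beta> :: "'h \<Rightarrow> 'h"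
    and sE :: "'k \<Rightarrow> 'e::ab_group_add \<Rightarrow> 'e"
    and brE :: "'e \<Rightarrow> 'e \<Rightarrow> 'e" and trE :: "'e \<Rightarrow> 'e \<Rightarrow> 'e \<Rightarrow> 'e" and \<alpha>E :: "'e \<Rightarrow> 'e"
    and i :: "'h \<Rightarrow> 'e" and p :: "'e \<Rightarrow> 't" and \<sigma> :: "'t \<Rightarrow> 'e"
  assumes "alg_closed_field TYPE('k)" and "char_not_2_3 TYPE('k)"
    and "abelian_extension sT brT trT \<alpha> sh brh trh \<beta> sE brE trE \<alpha>E i p"
    and "is_section sT \<alpha> sE \<alpha>E p \<sigma>"
  shows "cocycle23 sT brT trT \<alpha> sE (range i) \<alpha>E
           (\<lambda>x u. brE (\<sigma> x) u)
           (\<lambda>x1 x2 u. trE (\<sigma> x1) (\<sigma> x2) u)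
           (\<lambda>x1 x2 u. trE u (\<sigma> x1) (\<sigma> x2))
           (\<lambda>x1 x2. brE (\<sigma> x1) (\<sigma> x2) - \<sigma> (brT x1 x2))
           (\<lambda>x1 x2 x3. trE (\<sigma> x1) (\<sigma> x2) (\<sigma> x3) - \<sigma> (trT x1 x2 x3))"
proof -
  from assms(3) have ext: "HLYA_extension sT brT trT \<alpha> sh brh trh \<beta> sE brE trE \<alpha>E i p"
    unfolding abelian_extension_def by blast
  then have HT: "HLYA sT brT trT \<alpha>" and HE: "HLYA sE brE trE \<alpha>E"
    and ph: "HLYA_hom sE brE trE \<alpha>E sT brT trT \<alpha> p" and rng: "range i = {z. p z = 0}"
    unfolding HLYA_extension_def by - (elim conjE; fast)+
  from assms(4) have sl: "Vector_Spaces.linear sT sE \<sigma>" and ps: "\<And>x. p (\<sigma> x) = x"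
    and as: "\<And>x. \<alpha>E (\<sigma> x) = \<sigma> (\<alpha> x)"
    unfolding is_section_def by - (elim conjE; fast)+
  from HT have linT: "Vector_Spaces.linear sT sT \<alpha>" and bT: "bilin sT sT sT brT"
    and tT: "trilin sT sT sT sT trT"
    and skT: "\<And>x1 x2. brT x1 x2 + brT x2 x1 = 0"
    and tskT: "\<And>x1 x2 x3. trT x1 x2 x3 + trT x2 x1 x3 = 0"
    and aT2: "\<And>x1 x2. \<alpha> (brT x1 x2) = brT (\<alpha> x1) (\<alpha> x2)"
    and aT3: "\<And>x1 x2 x3. \<alpha> (trT x1 x2 x3) = trT (\<alpha> x1) (\<alpha> x2) (\<alpha> x3)"
    and T3: "\<And>x1 x2 x3. (brT (brT x1 x2) (\<alpha> x3) + trT x1 x2 x3) + (brT (brT x2 x3) (\<alpha> x1) + trT x2 x3 x1)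
        + (brT (brT x3 x1) (\<alpha> x2) + trT x3 x1 x2) = 0"
    and T4: "\<And>x1 x2 x3 y1. trT (brT x1 x2) (\<alpha> x3) (\<alpha> y1) + trT (brT x2 x3) (\<alpha> x1) (\<alpha> y1)
        + trT (brT x3 x1) (\<alpha> x2) (\<alpha> y1) = 0"
    and T5: "\<And>x1 x2 y1 y2. trT (\<alpha> x1) (\<alpha> x2) (brT y1 y2)
        = brT (trT x1 x2 y1) (\<alpha> (\<alpha> y2)) + brT (\<alpha> (\<alpha> y1)) (trT x1 x2 y2)"
    and T6: "\<And>x1 x2 y1 y2 y3. trT (\<alpha> (\<alpha> x1)) (\<alpha> (\<alpha> x2)) (trT y1 y2 y3)
        = trT (trT x1 x2 y1) (\<alpha> (\<alpha> y2)) (\<alpha> (\<alpha> y3))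
          + trT (\<alpha> (\<alpha> y1)) (trT x1 x2 y2) (\<alpha> (\<alpha> y3))
          + trT (\<alpha> (\<alpha> y1)) (\<alpha> (\<alpha> y2)) (trT x1 x2 y3)"
    unfolding HLYA_def by - (elim conjE; fast)+
  from HE have linE: "Vector_Spaces.linear sE sE \<alpha>E" and bE: "bilin sE sE sE brE"
    and tE: "trilin sE sE sE sE trE"
    and skE: "\<And>x1 x2. brE x1 x2 + brE x2 x1 = 0"
    and tskE: "\<And>x1 x2 x3. trE x1 x2 x3 + trE x2 x1 x3 = 0"
    and aE2: "\<And>x1 x2. \<alpha>E (brE x1 x2) = brE (\<alpha>E x1) (\<alpha>E x2)"
    and aE3: "\<And>x1 x2 x3. \<alpha>E (trE x1 x2 x3) = trE (\<alpha>E x1) (\<alpha>E x2) (\<alpha>E x3)"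
    and E3: "\<And>x1 x2 x3. (brE (brE x1 x2) (\<alpha>E x3) + trE x1 x2 x3) + (brE (brE x2 x3) (\<alpha>E x1) + trE x2 x3 x1)
        + (brE (brE x3 x1) (\<alpha>E x2) + trE x3 x1 x2) = 0"
    and E4: "\<And>x1 x2 x3 y1. trE (brE x1 x2) (\<alpha>E x3) (\<alpha>E y1) + trE (brE x2 x3) (\<alpha>E x1) (\<alpha>E y1)
        + trE (brE x3 x1) (\<alpha>E x2) (\<alpha>E y1) = 0"
    and E5: "\<And>x1 x2 y1 y2. trE (\<alpha>E x1) (\<alpha>E x2) (brE y1 y2)
        = brE (trE x1 x2 y1) (\<alpha>E (\<alpha>E y2)) + brE (\<alpha>E (\<alpha>E y1)) (trE x1 x2 y2)"
    and E6: "\<And>x1 x2 y1 y2 y3. trE (\<alpha>E (\<alpha>E x1)) (\<alpha>E (\<alpha>E x2)) (trE y1 y2 y3)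
        = trE (trE x1 x2 y1) (\<alpha>E (\<alpha>E y2)) (\<alpha>E (\<alpha>E y3))
          + trE (\<alpha>E (\<alpha>E y1)) (trE x1 x2 y2) (\<alpha>E (\<alpha>E y3))
          + trE (\<alpha>E (\<alpha>E y1)) (\<alpha>E (\<alpha>E y2)) (trE x1 x2 y3)"
    unfolding HLYA_def by - (elim conjE; fast)+
  from ph have pl: "Vector_Spaces.linear sE sT p"
    and pb: "\<And>x y. p (brE x y) = brT (p x) (p y)"
    and pt: "\<And>x y z. p (trE x y z) = trT (p x) (p y) (p z)"
    unfolding HLYA_hom_def by - (elim conjE; fast)+
  have bE1: "\<And>y. Vector_Spaces.linear sE sE (\<lambda>x. brE x y)" and bE2: "\<And>x. Vector_Spaces.linear sE sE (brE x)"
    using bE unfolding bilin_def by blast+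
  have bT1: "\<And>y. Vector_Spaces.linear sT sT (\<lambda>x. brT x y)" and bT2: "\<And>x. Vector_Spaces.linear sT sT (brT x)"
    using bT unfolding bilin_def by blast+
  have tE1: "\<And>y z. Vector_Spaces.linear sE sE (\<lambda>x. trE x y z)"
    and tE2: "\<And>x z. Vector_Spaces.linear sE sE (\<lambda>y. trE x y z)"
    and tE3: "\<And>x y. Vector_Spaces.linear sE sE (trE x y)"
    using tE unfolding trilin_def by blast+
  have tT1: "\<And>y z. Vector_Spaces.linear sT sT (\<lambda>x. trT x y z)"
    and tT2: "\<And>x z. Vector_Spaces.linear sT sT (\<lambda>y. trT x y z)"
    and tT3: "\<And>x y. Vector_Spaces.linear sT sT (trT x y)"
    using tT unfolding trilin_def by blast+
  have sadd: "\<And>a b. \<sigma> (a + b) = \<sigma> a + \<sigma> b" using lin_add[OF sl] .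
  have sadd_all: "\<forall>a b. \<sigma> (a + b) = \<sigma> a + \<sigma> b" using sadd by blast
  have sdiff: "\<And>a b. \<sigma> (a - b) = \<sigma> a - \<sigma> b" using lin_diff[OF sl] .
  have s0: "\<sigma> 0 = 0" using lin_diff[OF sl, of 0 0] by simp
  have bEl: "\<And>a b c. brE (a + b) c = brE a c + brE b c" using lin_add[OF bE1] .
  have bEr: "\<And>a b c. brE c (a + b) = brE c a + brE c b" using lin_add[OF bE2] .
  have tEa: "\<And>a b c d. trE (a + b) c d = trE a c d + trE b c d" using lin_add[OF tE1] .
  have tEb: "\<And>a b c d. trE c (a + b) d = trE c a d + trE c b d" using lin_add[OF tE2] .
  have tEc: "\<And>a b c d. trE c d (a + b) = trE c d a + trE c d b" using lin_add[OF tE3] .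
  have skE': "\<And>a b. brE a b = - brE b a" using skE by (metis add_eq_0_iff)
  have tskE': "\<And>a b c. trE a b c = - trE b a c" using tskE by (metis add_eq_0_iff)
  have skT': "\<And>a b. brT a b = - brT b a" using skT by (metis add_eq_0_iff)
  have tskT': "\<And>a b c. trT a b c = - trT b a c" using tskT by (metis add_eq_0_iff)
  define N where "N = (\<lambda>x1 x2. brE (\<sigma> x1) (\<sigma> x2) - \<sigma> (brT x1 x2))"
  define W where "W = (\<lambda>x1 x2 x3. trE (\<sigma> x1) (\<sigma> x2) (\<sigma> x3) - \<sigma> (trT x1 x2 x3))"
  have eN: "\<And>x y. brE (\<sigma> x) (\<sigma> y) = N x y + \<sigma> (brT x y)" unfolding N_def by simp
  have eW: "\<And>x y z. trE (\<sigma> x) (\<sigma> y) (\<sigma> z) = W x y z + \<sigma> (trT x y z)" unfolding W_def by simp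
  have "cocycle23 sT brT trT \<alpha> sE (range i) \<alpha>E
           (\<lambda>x u. brE (\<sigma> x) u)
           (\<lambda>x1 x2 u. trE (\<sigma> x1) (\<sigma> x2) u)
           (\<lambda>x1 x2 u. trE u (\<sigma> x1) (\<sigma> x2)) N W"
    unfolding cocycle23_def
  proof (intro conjI allI)
    fix x1 x2 show "N x1 x2 \<in> range i"
      unfolding rng N_def by (simp add: lin_diff[OF pl] pb ps)
  next
    fix x1 x2 x3 show "W x1 x2 x3 \<in> range i"
      unfolding rng W_def by (simp add: lin_diff[OF pl] pt ps)
  next
    show "bilin sT sT sE N" unfolding bilin_def N_def
      by (intro conjI allI lin_sub lin_comp[OF sl] lin_comp[OF _ sl] bE1 bE2 bT1 bT2)
  next
    show "trilin sT sT sT sE W" unfolding trilin_def W_def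
      by (intro conjI allI lin_sub lin_comp[OF sl] lin_comp[OF _ sl] tE1 tE2 tE3 tT1 tT2 tT3)
  next
    fix x1 x2 show "N x1 x2 = - N x2 x1"
      unfolding N_def using skE'[of "\<sigma> x1" "\<sigma> x2"] skT'[of x1 x2]
      by (simp add: lin_diff[OF sl] additive_facts(3)[OF sadd_all])
  next
    fix x1 x2 x3 show "W x1 x2 x3 = - W x2 x1 x3"
      unfolding W_def using tskE'[of "\<sigma> x1" "\<sigma> x2"] tskT'[of x1 x2]
      by (simp add: additive_facts(3)[OF sadd_all])
  next
    fix x1 x2 show "N (\<alpha> x1) (\<alpha> x2) = \<alpha>E (N x1 x2)"
      unfolding N_def by (simp add: lin_diff[OF linE] aE2 as aT2)
  next
    fix x1 x2 x3 show "W (\<alpha> x1) (\<alpha> x2) (\<alpha> x3) = \<alpha>E (W x1 x2 x3)"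
      unfolding W_def by (simp add: lin_diff[OF linE] aE3 as aT3)
  next
    fix x1 x2 x3
    have k: "brE (brE (\<sigma> a) (\<sigma> b)) (\<alpha>E (\<sigma> c)) =
       - brE (\<sigma> (\<alpha> c)) (N a b) + N (brT a b) (\<alpha> c) + \<sigma> (brT (brT a b) (\<alpha> c))" for a b c
      by (simp add: eN as bEl skE'[of "N a b"])
    have e: "\<sigma> ((brT (brT x1 x2) (\<alpha> x3) + trT x1 x2 x3) + (brT (brT x2 x3) (\<alpha> x1) + trT x2 x3 x1)
        + (brT (brT x3 x1) (\<alpha> x2) + trT x3 x1 x2)) = 0" using T3 s0 by simp
    have "((brE (brE (\<sigma> x1) (\<sigma> x2)) (\<alpha>E (\<sigma> x3)) + trE (\<sigma> x1) (\<sigma> x2) (\<sigma> x3)) + (brE (brE (\<sigma> x2) (\<sigma> x3)) (\<alpha>E (\<sigma> x1)) + trE (\<sigma> x2) (\<sigma> x3) (\<sigma> x1))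
        + (brE (brE (\<sigma> x3) (\<sigma> x1)) (\<alpha>E (\<sigma> x2)) + trE (\<sigma> x3) (\<sigma> x1) (\<sigma> x2))) - \<sigma> ((brT (brT x1 x2) (\<alpha> x3) + trT x1 x2 x3) + (brT (brT x2 x3) (\<alpha> x1) + trT x2 x3 x1)
        + (brT (brT x3 x1) (\<alpha> x2) + trT x3 x1 x2)) = 0" using E3[of "\<sigma> x1" "\<sigma> x2" "\<sigma> x3"] e by simp
    moreover have "((brE (brE (\<sigma> x1) (\<sigma> x2)) (\<alpha>E (\<sigma> x3)) + trE (\<sigma> x1) (\<sigma> x2) (\<sigma> x3)) + (brE (brE (\<sigma> x2) (\<sigma> x3)) (\<alpha>E (\<sigma> x1)) + trE (\<sigma> x2) (\<sigma> x3) (\<sigma> x1))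
        + (brE (brE (\<sigma> x3) (\<sigma> x1)) (\<alpha>E (\<sigma> x2)) + trE (\<sigma> x3) (\<sigma> x1) (\<sigma> x2))) - \<sigma> ((brT (brT x1 x2) (\<alpha> x3) + trT x1 x2 x3) + (brT (brT x2 x3) (\<alpha> x1) + trT x2 x3 x1)
        + (brT (brT x3 x1) (\<alpha> x2) + trT x3 x1 x2)) = (W x1 x2 x3 - brE (\<sigma> (\<alpha> x1)) (N x2 x3) + N (brT x1 x2) (\<alpha> x3))
      + (W x2 x3 x1 - brE (\<sigma> (\<alpha> x2)) (N x3 x1) + N (brT x2 x3) (\<alpha> x1))
      + (W x3 x1 x2 - brE (\<sigma> (\<alpha> x3)) (N x1 x2) + N (brT x3 x1) (\<alpha> x2))"
      by (simp add: k eW sadd algebra_simps)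
    ultimately show "(W x1 x2 x3 - brE (\<sigma> (\<alpha> x1)) (N x2 x3) + N (brT x1 x2) (\<alpha> x3))
      + (W x2 x3 x1 - brE (\<sigma> (\<alpha> x2)) (N x3 x1) + N (brT x2 x3) (\<alpha> x1))
      + (W x3 x1 x2 - brE (\<sigma> (\<alpha> x3)) (N x1 x2) + N (brT x3 x1) (\<alpha> x2)) = 0" by metis
  next
    fix x1 x2 x3 y1
    have k: "trE (brE (\<sigma> a) (\<sigma> b)) (\<alpha>E (\<sigma> c)) (\<alpha>E (\<sigma> y1)) =
       trE (N a b) (\<sigma> (\<alpha> c)) (\<sigma> (\<alpha> y1)) + W (brT a b) (\<alpha> c) (\<alpha> y1)
         + \<sigma> (trT (brT a b) (\<alpha> c) (\<alpha> y1))" for a b c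
      by (simp add: eN eW as tEa)
    have e: "\<sigma> (trT (brT x1 x2) (\<alpha> x3) (\<alpha> y1) + trT (brT x2 x3) (\<alpha> x1) (\<alpha> y1)
        + trT (brT x3 x1) (\<alpha> x2) (\<alpha> y1)) = 0" using T4 s0 by simp
    have A: "(trE (brE (\<sigma> x1) (\<sigma> x2)) (\<alpha>E (\<sigma> x3)) (\<alpha>E (\<sigma> y1)) + trE (brE (\<sigma> x2) (\<sigma> x3)) (\<alpha>E (\<sigma> x1)) (\<alpha>E (\<sigma> y1))
        + trE (brE (\<sigma> x3) (\<sigma> x1)) (\<alpha>E (\<sigma> x2)) (\<alpha>E (\<sigma> y1))) - \<sigma> (trT (brT x1 x2) (\<alpha> x3) (\<alpha> y1) + trT (brT x2 x3) (\<alpha> x1) (\<alpha> y1)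
        + trT (brT x3 x1) (\<alpha> x2) (\<alpha> y1)) = 0" by (simp only: E4[of "\<sigma> x1" "\<sigma> x2" "\<sigma> x3" "\<sigma> y1"] e diff_zero)
    have B: "(trE (brE (\<sigma> x1) (\<sigma> x2)) (\<alpha>E (\<sigma> x3)) (\<alpha>E (\<sigma> y1)) + trE (brE (\<sigma> x2) (\<sigma> x3)) (\<alpha>E (\<sigma> x1)) (\<alpha>E (\<sigma> y1))
        + trE (brE (\<sigma> x3) (\<sigma> x1)) (\<alpha>E (\<sigma> x2)) (\<alpha>E (\<sigma> y1))) - \<sigma> (trT (brT x1 x2) (\<alpha> x3) (\<alpha> y1) + trT (brT x2 x3) (\<alpha> x1) (\<alpha> y1)
        + trT (brT x3 x1) (\<alpha> x2) (\<alpha> y1)) = (trE (N x2 x3) (\<sigma> (\<alpha> x1)) (\<sigma> (\<alpha> y1)) + W (brT x1 x2) (\<alpha> x3) (\<alpha> y1))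
      + (trE (N x3 x1) (\<sigma> (\<alpha> x2)) (\<sigma> (\<alpha> y1)) + W (brT x2 x3) (\<alpha> x1) (\<alpha> y1))
      + (trE (N x1 x2) (\<sigma> (\<alpha> x3)) (\<sigma> (\<alpha> y1)) + W (brT x3 x1) (\<alpha> x2) (\<alpha> y1))"
      unfolding k sadd by (simp add: algebra_simps)
    show "(trE (N x2 x3) (\<sigma> (\<alpha> x1)) (\<sigma> (\<alpha> y1)) + W (brT x1 x2) (\<alpha> x3) (\<alpha> y1))
      + (trE (N x3 x1) (\<sigma> (\<alpha> x2)) (\<sigma> (\<alpha> y1)) + W (brT x2 x3) (\<alpha> x1) (\<alpha> y1))
      + (trE (N x1 x2) (\<sigma> (\<alpha> x3)) (\<sigma> (\<alpha> y1)) + W (brT x3 x1) (\<alpha> x2) (\<alpha> y1)) = 0" by (rule trans[OF B[symmetric] A])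
  next
    fix x1 x2 y1 y2
    have L: "trE (\<alpha>E (\<sigma> x1)) (\<alpha>E (\<sigma> x2)) (brE (\<sigma> y1) (\<sigma> y2)) =
      trE (\<sigma> (\<alpha> x1)) (\<sigma> (\<alpha> x2)) (N y1 y2) + W (\<alpha> x1) (\<alpha> x2) (brT y1 y2)
      + \<sigma> (trT (\<alpha> x1) (\<alpha> x2) (brT y1 y2))"
      by (simp add: eN eW as tEc)
    have R1: "brE (trE (\<sigma> x1) (\<sigma> x2) (\<sigma> y1)) (\<alpha>E (\<alpha>E (\<sigma> y2))) =
      - brE (\<sigma> (\<alpha> (\<alpha> y2))) (W x1 x2 y1) + N (trT x1 x2 y1) (\<alpha> (\<alpha> y2))
      + \<sigma> (brT (trT x1 x2 y1) (\<alpha> (\<alpha> y2)))"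
      by (simp add: eN eW as bEl skE'[of "W x1 x2 y1"])
    have R2: "brE (\<alpha>E (\<alpha>E (\<sigma> y1))) (trE (\<sigma> x1) (\<sigma> x2) (\<sigma> y2)) =
      brE (\<sigma> (\<alpha> (\<alpha> y1))) (W x1 x2 y2) + N (\<alpha> (\<alpha> y1)) (trT x1 x2 y2)
      + \<sigma> (brT (\<alpha> (\<alpha> y1)) (trT x1 x2 y2))"
      by (simp add: eN eW as bEr)
    have e: "\<sigma> (trT (\<alpha> x1) (\<alpha> x2) (brT y1 y2)) = \<sigma> (brT (trT x1 x2 y1) (\<alpha> (\<alpha> y2)))
       + \<sigma> (brT (\<alpha> (\<alpha> y1)) (trT x1 x2 y2))" using T5 sadd by simp
    have "W (\<alpha> x1) (\<alpha> x2) (brT y1 y2) + trE (\<sigma> (\<alpha> x1)) (\<sigma> (\<alpha> x2)) (N y1 y2) =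
      trE (\<alpha>E (\<sigma> x1)) (\<alpha>E (\<sigma> x2)) (brE (\<sigma> y1) (\<sigma> y2)) - \<sigma> (trT (\<alpha> x1) (\<alpha> x2) (brT y1 y2))"
      unfolding L by (simp add: algebra_simps)
    also have "\<dots> = brE (trE (\<sigma> x1) (\<sigma> x2) (\<sigma> y1)) (\<alpha>E (\<alpha>E (\<sigma> y2))) + brE (\<alpha>E (\<alpha>E (\<sigma> y1))) (trE (\<sigma> x1) (\<sigma> x2) (\<sigma> y2))
       - (\<sigma> (brT (trT x1 x2 y1) (\<alpha> (\<alpha> y2))) + \<sigma> (brT (\<alpha> (\<alpha> y1)) (trT x1 x2 y2)))"
      by (simp only: E5[of "\<sigma> x1" "\<sigma> x2" "\<sigma> y1" "\<sigma> y2"] e)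
    also have "\<dots> =        N (trT x1 x2 y1) (\<alpha> (\<alpha> y2)) + N (\<alpha> (\<alpha> y1)) (trT x1 x2 y2) +
       brE (\<sigma> (\<alpha> (\<alpha> y1))) (W x1 x2 y2) - brE (\<sigma> (\<alpha> (\<alpha> y2))) (W x1 x2 y1)"
      unfolding R1 R2 by (simp add: algebra_simps)
    finally show "W (\<alpha> x1) (\<alpha> x2) (brT y1 y2) + trE (\<sigma> (\<alpha> x1)) (\<sigma> (\<alpha> x2)) (N y1 y2) =        N (trT x1 x2 y1) (\<alpha> (\<alpha> y2)) + N (\<alpha> (\<alpha> y1)) (trT x1 x2 y2) +
       brE (\<sigma> (\<alpha> (\<alpha> y1))) (W x1 x2 y2) - brE (\<sigma> (\<alpha> (\<alpha> y2))) (W x1 x2 y1)" .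
  next
    fix x1 x2 y1 y2 y3
    have L: "trE (\<alpha>E (\<alpha>E (\<sigma> x1))) (\<alpha>E (\<alpha>E (\<sigma> x2))) (trE (\<sigma> y1) (\<sigma> y2) (\<sigma> y3)) =
      trE (\<sigma> (\<alpha> (\<alpha> x1))) (\<sigma> (\<alpha> (\<alpha> x2))) (W y1 y2 y3) + W (\<alpha> (\<alpha> x1)) (\<alpha> (\<alpha> x2)) (trT y1 y2 y3)
      + \<sigma> (trT (\<alpha> (\<alpha> x1)) (\<alpha> (\<alpha> x2)) (trT y1 y2 y3))"
      by (simp add: eW as tEc)
    have R1: "trE (trE (\<sigma> x1) (\<sigma> x2) (\<sigma> y1)) (\<alpha>E (\<alpha>E (\<sigma> y2))) (\<alpha>E (\<alpha>E (\<sigma> y3))) =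
      trE (W x1 x2 y1) (\<sigma> (\<alpha> (\<alpha> y2))) (\<sigma> (\<alpha> (\<alpha> y3))) + W (trT x1 x2 y1) (\<alpha> (\<alpha> y2)) (\<alpha> (\<alpha> y3))
      + \<sigma> (trT (trT x1 x2 y1) (\<alpha> (\<alpha> y2)) (\<alpha> (\<alpha> y3)))"
      by (simp add: eW as tEa)
    have R2: "trE (\<alpha>E (\<alpha>E (\<sigma> y1))) (trE (\<sigma> x1) (\<sigma> x2) (\<sigma> y2)) (\<alpha>E (\<alpha>E (\<sigma> y3))) =
      - trE (W x1 x2 y2) (\<sigma> (\<alpha> (\<alpha> y1))) (\<sigma> (\<alpha> (\<alpha> y3))) + W (\<alpha> (\<alpha> y1)) (trT x1 x2 y2) (\<alpha> (\<alpha> y3))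
      + \<sigma> (trT (\<alpha> (\<alpha> y1)) (trT x1 x2 y2) (\<alpha> (\<alpha> y3)))"
      by (simp add: eW as tEb tskE'[of "\<sigma> (\<alpha> (\<alpha> y1))" "W x1 x2 y2"])
    have R3: "trE (\<alpha>E (\<alpha>E (\<sigma> y1))) (\<alpha>E (\<alpha>E (\<sigma> y2))) (trE (\<sigma> x1) (\<sigma> x2) (\<sigma> y3)) =
      trE (\<sigma> (\<alpha> (\<alpha> y1))) (\<sigma> (\<alpha> (\<alpha> y2))) (W x1 x2 y3) + W (\<alpha> (\<alpha> y1)) (\<alpha> (\<alpha> y2)) (trT x1 x2 y3)
      + \<sigma> (trT (\<alpha> (\<alpha> y1)) (\<alpha> (\<alpha> y2)) (trT x1 x2 y3))"
      by (simp add: eW as tEc)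
    have e: "\<sigma> (trT (\<alpha> (\<alpha> x1)) (\<alpha> (\<alpha> x2)) (trT y1 y2 y3)) =
        \<sigma> (trT (trT x1 x2 y1) (\<alpha> (\<alpha> y2)) (\<alpha> (\<alpha> y3)))
      + \<sigma> (trT (\<alpha> (\<alpha> y1)) (trT x1 x2 y2) (\<alpha> (\<alpha> y3)))
      + \<sigma> (trT (\<alpha> (\<alpha> y1)) (\<alpha> (\<alpha> y2)) (trT x1 x2 y3))" using arg_cong[OF T6[of x1 x2 y1 y2 y3], of \<sigma>] by (simp only: sadd)
    have "W (\<alpha> (\<alpha> x1)) (\<alpha> (\<alpha> x2)) (trT y1 y2 y3) + trE (\<sigma> (\<alpha> (\<alpha> x1))) (\<sigma> (\<alpha> (\<alpha> x2))) (W y1 y2 y3) =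
      trE (\<alpha>E (\<alpha>E (\<sigma> x1))) (\<alpha>E (\<alpha>E (\<sigma> x2))) (trE (\<sigma> y1) (\<sigma> y2) (\<sigma> y3)) - \<sigma> (trT (\<alpha> (\<alpha> x1)) (\<alpha> (\<alpha> x2)) (trT y1 y2 y3))"
      unfolding L by (simp add: algebra_simps)
    also have "\<dots> = trE (trE (\<sigma> x1) (\<sigma> x2) (\<sigma> y1)) (\<alpha>E (\<alpha>E (\<sigma> y2))) (\<alpha>E (\<alpha>E (\<sigma> y3)))
          + trE (\<alpha>E (\<alpha>E (\<sigma> y1))) (trE (\<sigma> x1) (\<sigma> x2) (\<sigma> y2)) (\<alpha>E (\<alpha>E (\<sigma> y3)))
          + trE (\<alpha>E (\<alpha>E (\<sigma> y1))) (\<alpha>E (\<alpha>E (\<sigma> y2))) (trE (\<sigma> x1) (\<sigma> x2) (\<sigma> y3))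
       - (\<sigma> (trT (trT x1 x2 y1) (\<alpha> (\<alpha> y2)) (\<alpha> (\<alpha> y3)))
      + \<sigma> (trT (\<alpha> (\<alpha> y1)) (trT x1 x2 y2) (\<alpha> (\<alpha> y3)))
      + \<sigma> (trT (\<alpha> (\<alpha> y1)) (\<alpha> (\<alpha> y2)) (trT x1 x2 y3)))"
      by (simp only: E6[of "\<sigma> x1" "\<sigma> x2" "\<sigma> y1" "\<sigma> y2" "\<sigma> y3"] e)
    also have "\<dots> =        W (trT x1 x2 y1) (\<alpha> (\<alpha> y2)) (\<alpha> (\<alpha> y3)) + W (\<alpha> (\<alpha> y1)) (trT x1 x2 y2) (\<alpha> (\<alpha> y3)) +
       W (\<alpha> (\<alpha> y1)) (\<alpha> (\<alpha> y2)) (trT x1 x2 y3) +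
       trE (W x1 x2 y1) (\<sigma> (\<alpha> (\<alpha> y2))) (\<sigma> (\<alpha> (\<alpha> y3))) -
       trE (W x1 x2 y2) (\<sigma> (\<alpha> (\<alpha> y1))) (\<sigma> (\<alpha> (\<alpha> y3))) +
       trE (\<sigma> (\<alpha> (\<alpha> y1))) (\<sigma> (\<alpha> (\<alpha> y2))) (W x1 x2 y3)"
      unfolding R1 R2 R3 by (simp add: algebra_simps)
    finally show "W (\<alpha> (\<alpha> x1)) (\<alpha> (\<alpha> x2)) (trT y1 y2 y3) + trE (\<sigma> (\<alpha> (\<alpha> x1))) (\<sigma> (\<alpha> (\<alpha> x2))) (W y1 y2 y3) =        W (trT x1 x2 y1) (\<alpha> (\<alpha> y2)) (\<alpha> (\<alpha> y3)) + W (\<alpha> (\<alpha> y1)) (trT x1 x2 y2) (\<alpha> (\<alpha> y3)) +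
       W (\<alpha> (\<alpha> y1)) (\<alpha> (\<alpha> y2)) (trT x1 x2 y3) +
       trE (W x1 x2 y1) (\<sigma> (\<alpha> (\<alpha> y2))) (\<sigma> (\<alpha> (\<alpha> y3))) -
       trE (W x1 x2 y2) (\<sigma> (\<alpha> (\<alpha> y1))) (\<sigma> (\<alpha> (\<alpha> y3))) +
       trE (\<sigma> (\<alpha> (\<alpha> y1))) (\<sigma> (\<alpha> (\<alpha> y2))) (W x1 x2 y3)" .
  qed
  then show ?thesis unfolding N_def W_def .
qed

end
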